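(* (1) The set $\{\xi\in\Sigma_2\colon I_{[\xi]}\text{ is a single point}\}$ is residual in $\Sigma_2$. (2) For every $\xi^+\in\Sigma_2^+$, the set $\{\xi^-\in\Sigma_2^-\colon I_{[\xi^-.\xi^+]}\text{ is a non-trivial interval}\}$ is uncountable and dense in $\Sigma_2^-$. Moreover, for every closed interval $J\subset(0,1)$ and every $\xi^+\in\Sigma_2^+$, the set of $\xi^-\in\Sigma_2^-$ with $I_{[\xi^-.\xi^+]}\supset J$ is uncountable.
   Context: Let $f_0,f_1\colon[0,1]\to[0,1]$ be $C^1$ injective maps such that: (F0.i) $f_0$ is increasing and has exactly two fixed points $0$ and $1$, both hyperbolic, with $f_0'(0)=\beta>1$, $f_0'(1)=\lambda\in(0,1)$ and $\lambda\le f_0'(x)\le\beta$ for all $x\in[0,1]$; (F0.ii) there are intervals $I_0=[a_0,b_0]\subset(0,1)$ with $b_0=f_0(a_0)$ and $I_1=[a_1,b_1]$ with $b_1=f_0(a_1)$, and numbers $\alpha>1$, $N\ge1$, with $f_0^N(I_0)=I_1$ and $\lambda\,(f_0^N)'(x)>\alpha$ for all $x\in I_0$; moreover $f_0$ is expanding on $[0,b_0]$ and contracting on $[a_1,1]$; (F1.i) $f_1$ is decreasing with $\gamma'=\min_{[0,1]}|f_1'|\le\gamma=\max_{[0,1]}|f_1'|<1$; (F1.ii) $|f_1'(x)|\ge\bar\alpha>1/\alpha$ for all $x\in[f_1^2(a_1),a_1]$; (F01) $f_1(1)=0$, $f_1([a_1,1])\subset[0,a_0)$, and $[0,f_0^{-2}(b_0))\subset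 f_1([0,1])$. $\Sigma_2=\{0,1\}^{\mathbb Z}$ with the metric $d(\xi,\eta)=\sum_i2^{-|i|}|\xi_i-\eta_i|$; $\Sigma_2^+=\{0,1\}^{\mathbb N}$, $\Sigma_2^-=\{0,1\}^{-\mathbb N}$ (product topologies), and a sequence $\xi\in\Sigma_2$ is written $\xi=\xi^-.\xi^+$ with $\xi^-=(\ldots\xi_{-2}\xi_{-1})$, $\xi^+=(\xi_0\xi_1\ldots)$. The admissible domain of $\xi$ is $I_{[\xi]}=\bigcap_{m\ge1}f_{\xi_{-1}}\circ\cdots\circ f_{\xi_{-m}}([0,1])$, a nested intersection of non-trivial compact intervals, hence a point or a non-trivial interval. *)

theory Defs
  imports "HOL-Analysis.Analysis"
begin

text \<open>Symbols: the alphabet {0,1} is represented by bool, with False = 0 and True = 1.\<close>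

definition fsel :: "(real \<Rightarrow> real) \<Rightarrow> (real \<Rightarrow> real) \<Rightarrow> bool \<Rightarrow> real \<Rightarrow> real" where
  "fsel f0 f1 b = (if b then f1 else f0)"

text \<open>Two-sided sequences xi :: int => bool (Sigma_2).
  One-sided past xm :: nat => bool (Sigma_2^-), with xm n = xi_{-(n+1)}.
  One-sided future xp :: nat => bool (Sigma_2^+), with xp n = xi_n.\<close>

definition negpart :: "(int \<Rightarrow> bool) \<Rightarrow> nat \<Rightarrow> bool" where
  "negpart xi = (\<lambda>n. xi (- int n - 1))"

definition glue :: "(nat \<Rightarrow> bool) \<Rightarrow> (nat \<Rightarrow> bool) \<Rightarrow> int \<Rightarrow> bool" where
  "glue xm xp = (\<lambda>i. if 0 \<le> i then xp (nat i) else xm (nat (- i - 1)))"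

definition dSigma :: "(int \<Rightarrow> bool) \<Rightarrow> (int \<Rightarrow> bool) \<Rightarrow> real" where
  "dSigma xi eta = (\<Sum>\<^sub>\<infinity> i::int. (1/2) ^ nat \<bar>i\<bar> * of_bool (xi i \<noteq> eta i))"

definition Sigma2_top :: "(int \<Rightarrow> bool) topology" where
  "Sigma2_top = Metric_space.mtopology UNIV dSigma"

definition Sigma2_half_top :: "(nat \<Rightarrow> bool) topology" where
  "Sigma2_half_top = product_topology (\<lambda>_. discrete_topology UNIV) UNIV"

definition residual_in :: "'a topology \<Rightarrow> 'a set \<Rightarrow> bool" where
  "residual_in X S \<longleftrightarrow> S \<subseteq> topspace X \<and>
     (\<exists>U :: nat \<Rightarrow> 'a set. (\<forall>n. openin X (U n) \<and> X closure_of (U n) = topspace X)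
        \<and> (\<Inter>n. U n) \<subseteq> S)"

definition dense_in :: "'a topology \<Rightarrow> 'a set \<Rightarrow> bool" where
  "dense_in X S \<longleftrightarrow> S \<subseteq> topspace X \<and> X closure_of S = topspace X"

text \<open>compo f0 f1 xm m = f_{xi_{-1}} o ... o f_{xi_{-m}}.\<close>
primrec compo :: "(real \<Rightarrow> real) \<Rightarrow> (real \<Rightarrow> real) \<Rightarrow> (nat \<Rightarrow> bool) \<Rightarrow> nat \<Rightarrow> real \<Rightarrow> real" where
  "compo f0 f1 xm 0 = id"
| "compo f0 f1 xm (Suc m) = compo f0 f1 xm m \<circ> fsel f0 f1 (xm m)"

definition adm_dom :: "(real \<Rightarrow> real) \<Rightarrow> (real \<Rightarrow> real) \<Rightarrow> (int \<Rightarrow> bool) \<Rightarrow> real set" where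
  "adm_dom f0 f1 xi = (\<Inter>m\<in>{1..}. compo f0 f1 (negpart xi) m ` {0..1})"

end

theory Submission
  imports Defs
begin

definition wt :: "int \<Rightarrow> real" where "wt i = (1/2)^nat\<bar>i\<bar>"

lemma wt_pos: "0 < wt i" by (simp add: wt_def)

lemma geo_tail_sum:
  assumes "finite A" "\<forall>n\<in>A. M < n"
  shows "(\<Sum>n\<in>A. (1/2::real)^n) \<le> (1/2)^M"
proof -
  define h where "h n = (if M < n then (1/2::real)^n else 0)" for n
  have hs: "summable h"
    by (rule summable_comparison_test[where g="\<lambda>n. (1/2::real)^n"]) (auto simp: h_def)
  have "(\<Sum>n\<in>A. (1/2::real)^n) = sum h A" using assms by (auto simp: h_def intro!: sum.cong)
  also have "\<dots> \<le> suminf h" by (rule sum_le_suminf[OF hs assms(1)]) (auto simp: h_def)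
  also have "suminf h = (\<Sum>n. h (n + Suc M)) + (\<Sum>i<Suc M. h i)"
    by (rule suminf_split_initial_segment[OF hs])
  also have "(\<Sum>i<Suc M. h i) = 0" by (auto simp: h_def)
  also have "(\<Sum>n. h (n + Suc M)) = (\<Sum>n. (1/2)^(Suc M) * (1/2::real)^n)"
    by (simp add: h_def power_add mult.commute)
  also have "\<dots> = (1/2)^(Suc M) * 2"
    by (subst suminf_mult) (auto simp: suminf_geometric)
  finally show ?thesis by simp
qed

lemma wt_tail:
  assumes "finite F" "\<forall>i\<in>F. M < nat\<bar>i\<bar>"
  shows "(\<Sum>i\<in>F. wt i) \<le> 2*(1/2)^M"
proof -
  define P where "P = F \<inter> {0..}"
  define Q where "Q = F \<inter> {..<0}"
  have FPQ: "F = P \<union> Q" "P \<inter> Q = {}" by (auto simp: P_def Q_def)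
  have fin: "finite P" "finite Q" using assms by (auto simp: P_def Q_def)
  have injP: "inj_on (\<lambda>i. nat\<bar>i\<bar>) P" by (auto simp: inj_on_def P_def)
  have injQ: "inj_on (\<lambda>i. nat\<bar>i\<bar>) Q" by (auto simp: inj_on_def Q_def)
  have "(\<Sum>i\<in>P. wt i) = (\<Sum>n\<in>(\<lambda>i. nat\<bar>i\<bar>) ` P. (1/2::real)^n)"
    by (simp add: sum.reindex[OF injP] wt_def)
  also have "\<dots> \<le> (1/2)^M" using fin assms by (intro geo_tail_sum) (auto simp: P_def)
  finally have 1: "(\<Sum>i\<in>P. wt i) \<le> (1/2)^M" .
  have "(\<Sum>i\<in>Q. wt i) = (\<Sum>n\<in>(\<lambda>i. nat\<bar>i\<bar>) ` Q. (1/2::real)^n)"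
    by (simp add: sum.reindex[OF injQ] wt_def)
  also have "\<dots> \<le> (1/2)^M" using fin assms by (intro geo_tail_sum) (auto simp: Q_def)
  finally have 2: "(\<Sum>i\<in>Q. wt i) \<le> (1/2)^M" .
  have "(\<Sum>i\<in>F. wt i) = (\<Sum>i\<in>P. wt i) + (\<Sum>i\<in>Q. wt i)"
    using FPQ fin by (simp add: sum.union_disjoint)
  with 1 2 show ?thesis by simp
qed

lemma wt_all:
  assumes "finite F" shows "(\<Sum>i\<in>F. wt i) \<le> 3"
proof -
  have "(\<Sum>i\<in>F. wt i) = (\<Sum>i\<in>F \<inter> {0}. wt i) + (\<Sum>i\<in>F - {0}. wt i)"
    using assms by (metis Diff_disjoint Int_Diff_Un inf_commute sum.union_disjoint finite_Diff finite_Int Int_Diff_disjoint)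
  also have "(\<Sum>i\<in>F \<inter> {0}. wt i) \<le> 1"
    by (cases "0 \<in> F") (auto simp: wt_def Int_insert_right)
  also have "(\<Sum>i\<in>F - {0}. wt i) \<le> 2*(1/2)^0"
    using assms by (intro wt_tail) auto
  finally show ?thesis by simp
qed

lemma wt_summable:
  assumes "\<And>i. 0 \<le> g i \<and> g i \<le> wt i"
  shows "g summable_on UNIV"
proof (rule nonneg_bdd_above_summable_on)
  show "bdd_above (sum g ` {F. F \<subseteq> UNIV \<and> finite F})"
  proof (rule bdd_aboveI)
    fix x assume "x \<in> sum g ` {F. F \<subseteq> UNIV \<and> finite F}"
    then obtain F where F: "finite F" "x = sum g F" by auto
    have "sum g F \<le> sum wt F" using assms by (intro sum_mono) auto
    with wt_all[OF F(1)] F show "x \<le> 3" by simp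
  qed
qed (use assms in auto)

lemma wt_tail_infsum:
  assumes "\<And>i. 0 \<le> g i \<and> g i \<le> wt i" "\<And>i. nat\<bar>i\<bar> \<le> M \<Longrightarrow> g i = 0"
  shows "infsum g UNIV \<le> 2*(1/2)^M"
proof (rule infsum_le_finite_sums[OF wt_summable[OF assms(1)]])
  fix F :: "int set" assume F: "finite F"
  have "sum g F = sum g (F \<inter> {i. M < nat\<bar>i\<bar>})"
    using F assms(2) by (intro sum.mono_neutral_right) (auto simp: not_less)
  also have "\<dots> \<le> sum wt (F \<inter> {i. M < nat\<bar>i\<bar>})" using assms(1) by (intro sum_mono) auto
  also have "\<dots> \<le> 2*(1/2)^M" using F by (intro wt_tail) auto
  finally show "sum g F \<le> 2*(1/2)^M" .
qed

lemma dSigma_alt: "dSigma xi eta = infsum (\<lambda>i. wt i * of_bool (xi i \<noteq> eta i)) UNIV"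
  by (simp add: dSigma_def wt_def)

lemma term_bd: "0 \<le> wt i * of_bool P \<and> wt i * of_bool P \<le> wt i"
  using wt_pos[of i] by auto

lemma dSigma_summable: "(\<lambda>i. wt i * of_bool (xi i \<noteq> eta i)) summable_on UNIV"
  by (rule wt_summable[OF term_bd])

lemma dSigma_ge:
  assumes "xi i \<noteq> eta i" shows "wt i \<le> dSigma xi eta"
proof -
  have "infsum (\<lambda>i. wt i * of_bool (xi i \<noteq> eta i)) {i} \<le> infsum (\<lambda>i. wt i * of_bool (xi i \<noteq> eta i)) UNIV"
    by (rule infsum_mono_neutral[OF _ dSigma_summable]) (auto simp: term_bd)
  then show ?thesis using assms by (simp add: dSigma_alt)
qed

lemma dSigma_small:
  assumes "dSigma xi eta < (1/2)^M" "nat\<bar>i\<bar> \<le> M" shows "xi i = eta i"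
proof (rule ccontr)
  assume "xi i \<noteq> eta i"
  then have "wt i \<le> dSigma xi eta" by (rule dSigma_ge)
  moreover have "(1/2::real)^M \<le> wt i" unfolding wt_def using assms(2) by (intro power_decreasing) auto
  ultimately show False using assms(1) by simp
qed

lemma dSigma_close:
  assumes "\<And>i. nat\<bar>i\<bar> \<le> M \<Longrightarrow> xi i = eta i" shows "dSigma xi eta \<le> 2*(1/2)^M"
  unfolding dSigma_alt by (rule wt_tail_infsum) (auto simp: term_bd assms)

lemma dSigma_metric: "Metric_space UNIV dSigma"
proof
  fix x y z :: "int \<Rightarrow> bool"
  show "0 \<le> dSigma x y" unfolding dSigma_alt by (rule infsum_nonneg) (simp add: term_bd)
  show "dSigma x y = dSigma y x" unfolding dSigma_alt by (simp add: eq_commute[of "x _"])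
  show "(dSigma x y = 0) = (x = y)"
  proof
    assume "dSigma x y = 0"
    show "x = y"
    proof
      fix i show "x i = y i"
        using dSigma_ge[of x i y] wt_pos[of i] \<open>dSigma x y = 0\<close> by fastforce
    qed
  qed (simp add: dSigma_alt)
  show "dSigma x z \<le> dSigma x y + dSigma y z"
  proof -
    have "dSigma x z \<le> infsum (\<lambda>i. wt i * of_bool (x i \<noteq> y i) + wt i * of_bool (y i \<noteq> z i)) UNIV"
      unfolding dSigma_alt
      by (rule infsum_mono[OF dSigma_summable summable_on_add[OF dSigma_summable dSigma_summable]])
         (auto simp: wt_pos less_imp_le)
    also have "\<dots> = dSigma x y + dSigma y z"
      unfolding dSigma_alt by (rule infsum_add[OF dSigma_summable dSigma_summable])
    finally show ?thesis .
  qed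
qed



lemma mono_img:
  fixes g :: "real \<Rightarrow> real"
  assumes "a \<le> b" "continuous_on {a..b} g" "mono_on {a..b} g"
  shows "g ` {a..b} = {g a..g b}"
proof
  show "g ` {a..b} \<subseteq> {g a..g b}" using assms(1,3) by (auto simp: mono_on_def)
  show "{g a..g b} \<subseteq> g ` {a..b}"
  proof
    fix y assume "y \<in> {g a..g b}"
    then obtain x where "a \<le> x" "x \<le> b" "g x = y" using IVT'[of g a y b] assms by auto
    then show "y \<in> g ` {a..b}" by auto
  qed
qed

lemma anti_img:
  fixes g :: "real \<Rightarrow> real"
  assumes "a \<le> b" "continuous_on {a..b} g" "antimono_on {a..b} g"
  shows "g ` {a..b} = {g b..g a}"
proof
  show "g ` {a..b} \<subseteq> {g b..g a}" using assms(1,3) by (auto simp: monotone_on_def)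
  show "{g b..g a} \<subseteq> g ` {a..b}"
  proof
    fix y assume "y \<in> {g b..g a}"
    then obtain x where "a \<le> x" "x \<le> b" "g x = y" using IVT2'[of g b y a] assms by auto
    then show "y \<in> g ` {a..b}" by auto
  qed
qed

lemma negpart_glue[simp]: "negpart (glue xm xp) = xm"
  by (auto simp: negpart_def glue_def)

lemma compo_prefix:
  "(\<And>i. i < m \<Longrightarrow> xm i = ym i) \<Longrightarrow> compo f0 f1 xm m = compo f0 f1 ym m"
  by (induction m) auto

lemma compo_add:
  "compo f0 f1 xm (m + n) = compo f0 f1 xm m \<circ> compo f0 f1 (\<lambda>i. xm (m + i)) n"
  by (induction n) auto

lemma compo_const:
  "compo f0 f1 (\<lambda>_. b) n = (fsel f0 f1 b) ^^ n"
  by (induction n) (auto simp: fun_eq_iff funpow_swap1)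


locale sys =
  fixes f0 f1 :: "real \<Rightarrow> real"
  assumes c0: "continuous_on {0..1} f0" and c1: "continuous_on {0..1} f1"
    and m0: "f0 ` {0..1} \<subseteq> {0..1}" and m1: "f1 ` {0..1} \<subseteq> {0..1}"
    and inj0: "inj_on f0 {0..1}" and inj1: "inj_on f1 {0..1}"
    and mono0: "mono_on {0..1} f0" and anti1: "antimono_on {0..1} f1"
    and f00: "f0 0 = 0" and f01: "f0 1 = 1" and f0gt: "\<And>x. 0 < x \<Longrightarrow> x < 1 \<Longrightarrow> x < f0 x"
    and f11: "f1 1 = 0"
begin

lemma fsel_maps: "x \<in> {0..1} \<Longrightarrow> fsel f0 f1 b x \<in> {0..1}"
  using m0 m1 by (auto simp: fsel_def image_subset_iff)

lemma fsel_ge0[simp]: "0 \<le> x \<Longrightarrow> x \<le> 1 \<Longrightarrow> 0 \<le> fsel f0 f1 b x"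
  using fsel_maps[of x b] by auto
lemma fsel_le1[simp]: "0 \<le> x \<Longrightarrow> x \<le> 1 \<Longrightarrow> fsel f0 f1 b x \<le> 1"
  using fsel_maps[of x b] by auto

lemma fsel_cont: "continuous_on {0..1} (fsel f0 f1 b)"
  using c0 c1 by (auto simp: fsel_def)

lemma fsel_inj: "inj_on (fsel f0 f1 b) {0..1}"
  using inj0 inj1 by (auto simp: fsel_def)

lemma compo_maps: "x \<in> {0..1} \<Longrightarrow> compo f0 f1 xm m x \<in> {0..1}"
  by (induction m arbitrary: x) (auto simp: fsel_maps)

lemma compo_ge0[simp]: "0 \<le> x \<Longrightarrow> x \<le> 1 \<Longrightarrow> 0 \<le> compo f0 f1 xm m x"
  using compo_maps[of x xm m] by auto
lemma compo_le1[simp]: "0 \<le> x \<Longrightarrow> x \<le> 1 \<Longrightarrow> compo f0 f1 xm m x \<le> 1"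
  using compo_maps[of x xm m] by auto

lemma compo_cont: "continuous_on {0..1} (compo f0 f1 xm m)"
proof (induction m)
  case (Suc m)
  show ?case unfolding compo.simps
    by (rule continuous_on_compose[OF fsel_cont continuous_on_subset[OF Suc]])
       (auto simp: fsel_maps)
qed (auto intro: continuous_on_id)

lemma compo_inj: "inj_on (compo f0 f1 xm m) {0..1}"
proof (induction m)
  case (Suc m)
  show ?case unfolding compo.simps
    by (rule comp_inj_on[OF fsel_inj inj_on_subset[OF Suc]]) (auto simp: fsel_maps)
qed simp

lemma C_Suc: "compo f0 f1 xm (Suc m) ` {0..1} \<subseteq> compo f0 f1 xm m ` {0..1}"
proof -
  have "compo f0 f1 xm (Suc m) ` {0..1} = compo f0 f1 xm m ` (fsel f0 f1 (xm m) ` {0..1})"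
    by (simp add: image_comp)
  also have "\<dots> \<subseteq> compo f0 f1 xm m ` {0..1}" using fsel_maps by (intro image_mono) auto
  finally show ?thesis .
qed

lemma C_nest: "m \<le> m' \<Longrightarrow> compo f0 f1 xm m' ` {0..1} \<subseteq> compo f0 f1 xm m ` {0..1}"
proof (induction m' rule: dec_induct)
  case (step n) then show ?case using C_Suc[of xm n] by blast
qed simp

lemma C_compact: "compact (compo f0 f1 xm m ` {0..1})"
  by (rule compact_continuous_image[OF compo_cont]) simp

lemma C_connected: "connected (compo f0 f1 xm m ` {0..1})"
  by (rule connected_continuous_image[OF compo_cont]) simp

lemma adm_sub: "adm_dom f0 f1 xi \<subseteq> compo f0 f1 (negpart xi) m ` {0..1}"
proof -
  have "adm_dom f0 f1 xi \<subseteq> compo f0 f1 (negpart xi) (Suc m) ` {0..1}"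
    unfolding adm_dom_def by (rule INT_lower) simp
  also have "\<dots> \<subseteq> compo f0 f1 (negpart xi) m ` {0..1}" by (rule C_Suc)
  finally show ?thesis .
qed

lemma adm_eq: "adm_dom f0 f1 xi = (\<Inter>n. compo f0 f1 (negpart xi) n ` {0..1})"
proof (intro equalityI subsetI)
  fix x assume "x \<in> adm_dom f0 f1 xi" then show "x \<in> (\<Inter>n. compo f0 f1 (negpart xi) n ` {0..1})"
    using adm_sub by blast
next
  fix x assume "x \<in> (\<Inter>n. compo f0 f1 (negpart xi) n ` {0..1})"
  then show "x \<in> adm_dom f0 f1 xi" unfolding adm_dom_def by blast
qed

lemma adm_nonempty: "adm_dom f0 f1 xi \<noteq> {}"
  unfolding adm_eq
  by (rule compact_nest) (auto simp: C_compact C_nest)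

lemma adm_interval: "\<exists>a b. a \<le> b \<and> adm_dom f0 f1 xi = {a..b}"
proof -
  have "compact (adm_dom f0 f1 xi)" unfolding adm_eq
    by (rule compact_Inter) (auto simp: C_compact)
  moreover have "connected (adm_dom f0 f1 xi)"
  proof -
    have "\<And>n. convex (compo f0 f1 (negpart xi) n ` {0..1})"
      using C_connected connected_convex_1 by blast
    then have "convex (\<Inter>n. compo f0 f1 (negpart xi) n ` {0..1})"
      by (intro convex_Inter) blast
    then show ?thesis unfolding adm_eq using connected_convex_1 by blast
  qed
  ultimately obtain a b where "adm_dom f0 f1 xi = {a..b}"
    using connected_compact_interval_1 by blast
  with adm_nonempty[of xi] show ?thesis by (auto intro!: exI[of _ a])
qed

end


context sys begin

lemma f0_ge: "0 \<le> x \<Longrightarrow> x \<le> 1 \<Longrightarrow> x \<le> f0 x"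
  using f0gt[of x] f00 f01 by (cases "x = 0 \<or> x = 1") auto

lemma f0pow_eq: "f0 ^^ k = compo f0 f1 (\<lambda>_. False) k"
  by (simp add: compo_const fsel_def)

lemma f0pow_ge0[simp]: "0 \<le> x \<Longrightarrow> x \<le> 1 \<Longrightarrow> 0 \<le> (f0^^k) x"
  by (simp add: f0pow_eq)
lemma f0pow_le1[simp]: "0 \<le> x \<Longrightarrow> x \<le> 1 \<Longrightarrow> (f0^^k) x \<le> 1"
  by (simp add: f0pow_eq)
lemma f0pow_cont: "continuous_on {0..1} (f0^^k)"
  by (simp add: f0pow_eq compo_cont)
lemma f0pow_inj: "inj_on (f0^^k) {0..1}"
  by (simp add: f0pow_eq compo_inj)
lemma f0pow_00[simp]: "(f0^^k) 0 = 0"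
  by (induction k) (auto simp: f00)
lemma f0pow_11[simp]: "(f0^^k) 1 = 1"
  by (induction k) (auto simp: f01)

lemma f0pow_mono: "0 \<le> x \<Longrightarrow> x \<le> y \<Longrightarrow> y \<le> 1 \<Longrightarrow> (f0^^k) x \<le> (f0^^k) y"
proof (induction k)
  case (Suc k)
  then show ?case using mono0 by (auto simp: mono_on_def)
qed simp

lemma f0pow_mono_on: "mono_on {0..1} (f0^^k)"
  by (auto simp: mono_on_def intro: f0pow_mono)

lemma f0pow_strict: "0 \<le> x \<Longrightarrow> x < y \<Longrightarrow> y \<le> 1 \<Longrightarrow> (f0^^k) x < (f0^^k) y"
proof -
  assume a: "0 \<le> x" "x < y" "y \<le> 1"
  have "(f0^^k) x \<le> (f0^^k) y" using a by (intro f0pow_mono) auto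
  moreover have "(f0^^k) x \<noteq> (f0^^k) y" using inj_onD[OF f0pow_inj[of k], of x y] a by auto
  ultimately show ?thesis by simp
qed

lemma f0pow_ge: "0 \<le> x \<Longrightarrow> x \<le> 1 \<Longrightarrow> x \<le> (f0^^k) x"
proof (induction k)
  case (Suc k)
  then show ?case using f0_ge[of "(f0^^k) x"] by auto
qed simp

lemma f0pow_incr: "0 \<le> x \<Longrightarrow> x \<le> 1 \<Longrightarrow> k \<le> k' \<Longrightarrow> (f0^^k) x \<le> (f0^^k') x"
proof -
  assume x: "0 \<le> x" "x \<le> 1" and "k \<le> k'"
  then obtain j where j: "k' = k + j" using le_Suc_ex by blast
  have "(f0^^k') x = (f0^^k) ((f0^^j) x)" by (simp add: j funpow_add)
  moreover have "(f0^^k) x \<le> (f0^^k) ((f0^^j) x)"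
    using x f0pow_ge[of x j] by (intro f0pow_mono) auto
  ultimately show ?thesis by simp
qed

lemma escape:
  assumes e: "0 < e" "e \<le> 1" and r: "r < 1"
  shows "\<exists>k. r < (f0^^k) e"
proof (rule ccontr)
  assume "\<not> ?thesis"
  then have le: "\<And>k. (f0^^k) e \<le> r" by (simp add: not_less)
  have er: "e \<le> r" using le[of 0] by simp
  have cont: "continuous_on {e..r} (\<lambda>x. f0 x - x)"
    using e r by (intro continuous_intros continuous_on_subset[OF c0]) auto
  obtain z where z: "z \<in> {e..r}" "\<And>y. y \<in> {e..r} \<Longrightarrow> f0 z - z \<le> f0 y - y"
    using continuous_attains_inf[OF _ _ cont] er by fastforce
  define \<delta> where "\<delta> = f0 z - z"
  have dpos: "0 < \<delta>" using z(1) e r f0gt[of z] by (auto simp: \<delta>_def)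
  have "\<And>k. e + real k * \<delta> \<le> (f0^^k) e"
  proof -
    fix k show "e + real k * \<delta> \<le> (f0^^k) e"
    proof (induction k)
      case (Suc k)
      have "(f0^^k) e \<in> {e..r}" using f0pow_ge[of e k] e le[of k] by auto
      then have "\<delta> \<le> f0 ((f0^^k) e) - (f0^^k) e" using z(2) by (simp add: \<delta>_def)
      then show ?case using Suc by (simp add: algebra_simps)
    qed simp
  qed
  then have "\<And>k. real k * \<delta> \<le> r - e" using le by (smt (verit))
  moreover obtain k where "r - e < real k * \<delta>" using reals_Archimedean3[OF dpos] by blast
  ultimately show False by (smt (verit))
qed

lemma f1_strict: assumes "0 \<le> x" "x < y" "y \<le> 1" shows "f1 y < f1 x"
proof -
  have "f1 y \<le> f1 x" using anti1 assms unfolding monotone_on_def by simp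
  moreover have "f1 y \<noteq> f1 x" using inj_onD[OF inj1, of y x] assms by auto
  ultimately show ?thesis by simp
qed

lemma f1_0: "0 < f1 0" "f1 0 \<le> 1"
proof -
  show "0 < f1 0" using f1_strict[of 0 1] f11 by simp
  have "f1 0 \<in> f1 ` {0..1}" by simp
  then have "f1 0 \<in> {0..1}" using m1 by blast
  then show "f1 0 \<le> 1" by simp
qed

lemma block_step:
  assumes l: "0 < l" "l \<le> r" "r < 1" and k: "r < (f0^^k) (f1 0)"
  shows "\<exists>l' r'. 0 < l' \<and> l' \<le> r' \<and> r' < 1 \<and> ((f0^^k) \<circ> f1) ` {l'..r'} = {l..r}"
proof -
  define e where "e = f1 0"
  have e: "0 < e" "e \<le> 1" using f1_0 by (auto simp: e_def)
  have img0: "(f0^^k) ` {0..e} = {0..(f0^^k) e}"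
    using mono_img[of 0 e "f0^^k"] e continuous_on_subset[OF f0pow_cont]
      mono_on_subset[OF f0pow_mono_on] by auto
  have "l \<in> (f0^^k) ` {0..e}" "r \<in> (f0^^k) ` {0..e}" using img0 l k by (auto simp: e_def)
  then obtain u v where u: "u \<in> {0..e}" "(f0^^k) u = l" and v: "v \<in> {0..e}" "(f0^^k) v = r"
    by blast
  have uv: "u \<le> v"
  proof (rule ccontr)
    assume "\<not> u \<le> v" then have "(f0^^k) v < (f0^^k) u" using u v e by (intro f0pow_strict) auto
    then show False using u v l by simp
  qed
  have u0: "0 < u" using u l by (cases "u = 0") auto
  have ve: "v < e" using v k e_def by (cases "v = e") auto
  have img1: "f1 ` {0..1} = {0..e}" using anti_img[of 0 1 f1] c1 anti1 f11 by (simp add: e_def)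
  have "u \<in> f1 ` {0..1}" "v \<in> f1 ` {0..1}" using img1 u v by auto
  then obtain l' r' where r': "r' \<in> {0..1}" "f1 r' = u" and l': "l' \<in> {0..1}" "f1 l' = v" by blast
  have lr: "l' \<le> r'"
  proof (rule ccontr)
    assume "\<not> l' \<le> r'" then have "f1 l' < f1 r'" using l' r' by (intro f1_strict) auto
    then show False using uv l' r' by simp
  qed
  have r1: "r' < 1" using r' u0 f11 by (cases "r' = 1") auto
  have l0: "0 < l'" using l' ve e_def by (cases "l' = 0") auto
  have "f1 ` {l'..r'} = {u..v}"
    using anti_img[of l' r' f1] lr l' r' continuous_on_subset[OF c1] monotone_on_subset[OF anti1]
    by auto
  moreover have "(f0^^k) ` {u..v} = {l..r}"
    using mono_img[of u v "f0^^k"] uv u v e continuous_on_subset[OF f0pow_cont]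
      mono_on_subset[OF f0pow_mono_on] by auto
  ultimately have "((f0^^k) \<circ> f1) ` {l'..r'} = {l..r}" by (simp only: image_comp[symmetric])
  with l0 lr r1 show ?thesis by blast
qed

end


lemma uncountable_fun: "\<not> countable (UNIV :: (nat \<Rightarrow> bool) set)"
proof
  assume "countable (UNIV :: (nat \<Rightarrow> bool) set)"
  then have "range (from_nat_into (UNIV :: (nat \<Rightarrow> bool) set)) = UNIV" by simp
  then obtain m where "from_nat_into (UNIV :: (nat \<Rightarrow> bool) set) m = (\<lambda>n. \<not> from_nat_into UNIV n n)"
    by (metis UNIV_I imageE)
  then show False by (metis (full_types))
qed

context sys begin

definition Kf :: "real \<Rightarrow> nat" where "Kf r = (LEAST k. r < (f0^^k) (f1 0))"

lemma Kf_ok: assumes "r < 1" "Kf r \<le> k" shows "r < (f0^^k) (f1 0)"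
proof -
  have "r < (f0^^Kf r) (f1 0)" unfolding Kf_def
    by (rule LeastI_ex) (rule escape[OF f1_0 assms(1)])
  also have "\<dots> \<le> (f0^^k) (f1 0)" using f1_0 assms(2) by (intro f0pow_incr) auto
  finally show ?thesis .
qed

definition nxt :: "real \<times> real \<Rightarrow> nat \<Rightarrow> real \<times> real" where
  "nxt J k = (SOME J'. 0 < fst J' \<and> fst J' \<le> snd J' \<and> snd J' < 1 \<and>
       ((f0^^k) \<circ> f1) ` {fst J'..snd J'} = {fst J..snd J})"

lemma nxt_ok:
  assumes "0 < fst J" "fst J \<le> snd J" "snd J < 1" "snd J < (f0^^k) (f1 0)"
  shows "0 < fst (nxt J k) \<and> fst (nxt J k) \<le> snd (nxt J k) \<and> snd (nxt J k) < 1 \<and>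
       ((f0^^k) \<circ> f1) ` {fst (nxt J k)..snd (nxt J k)} = {fst J..snd J}"
proof -
  obtain l' r' where "0 < l' \<and> l' \<le> r' \<and> r' < 1 \<and> ((f0^^k) \<circ> f1) ` {l'..r'} = {fst J..snd J}"
    using block_step[OF assms] by blast
  then have "\<exists>J'. 0 < fst J' \<and> fst J' \<le> snd J' \<and> snd J' < 1 \<and>
       ((f0^^k) \<circ> f1) ` {fst J'..snd J'} = {fst J..snd J}" by (intro exI[of _ "(l',r')"]) simp
  then show ?thesis unfolding nxt_def by (rule someI_ex)
qed

primrec st :: "real \<times> real \<Rightarrow> (nat \<Rightarrow> bool) \<Rightarrow> nat \<Rightarrow> (real \<times> real) \<times> bool list" where
  "st J0 s 0 = (J0, [])"
| "st J0 s (Suc n) = (nxt (fst (st J0 s n)) (Kf (snd (fst (st J0 s n))) + of_bool (s n)),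
      snd (st J0 s n) @ replicate (Kf (snd (fst (st J0 s n))) + of_bool (s n)) False @ [True])"

definition Lc :: "bool list \<Rightarrow> real \<Rightarrow> real" where
  "Lc w = compo f0 f1 (\<lambda>i. w ! i) (length w)"

lemma Lc_append: "Lc (w @ v) = Lc w \<circ> Lc v"
proof -
  have "Lc (w @ v) = compo f0 f1 (\<lambda>i. (w @ v) ! i) (length w + length v)"
    by (simp add: Lc_def)
  also have "\<dots> = compo f0 f1 (\<lambda>i. (w @ v) ! i) (length w) \<circ>
                   compo f0 f1 (\<lambda>i. (w @ v) ! (length w + i)) (length v)"
    by (rule compo_add)
  also have "compo f0 f1 (\<lambda>i. (w @ v) ! i) (length w) = Lc w"
    unfolding Lc_def by (rule compo_prefix) (simp add: nth_append)
  also have "compo f0 f1 (\<lambda>i. (w @ v) ! (length w + i)) (length v) = Lc v"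
    unfolding Lc_def by (rule compo_prefix) simp
  finally show ?thesis .
qed

lemma Lc_rep: "Lc (replicate k False) = f0^^k"
proof -
  have "Lc (replicate k False) = compo f0 f1 (\<lambda>_. False) k"
    unfolding Lc_def by simp (rule compo_prefix, simp)
  then show ?thesis by (simp add: f0pow_eq)
qed

lemma Lc_True: "Lc [True] = f1"
  by (simp add: Lc_def fsel_def)

lemma st_inv:
  assumes cd: "0 < c" "c \<le> d" "d < 1"
  shows "0 < fst (fst (st (c,d) s n)) \<and> fst (fst (st (c,d) s n)) \<le> snd (fst (st (c,d) s n)) \<and>
    snd (fst (st (c,d) s n)) < 1 \<and>
    Lc (snd (st (c,d) s n)) ` {fst (fst (st (c,d) s n))..snd (fst (st (c,d) s n))} = {c..d}"
proof (induction n)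
  case 0 then show ?case using cd by (simp add: Lc_def)
next
  case (Suc n)
  define J where "J = fst (st (c,d) s n)"
  define w where "w = snd (st (c,d) s n)"
  define k where "k = Kf (snd J) + of_bool (s n)"
  have IH: "0 < fst J" "fst J \<le> snd J" "snd J < 1" "Lc w ` {fst J..snd J} = {c..d}"
    using Suc by (auto simp: J_def w_def)
  have "snd J < (f0^^k) (f1 0)" using IH by (intro Kf_ok) (auto simp: k_def)
  note N = nxt_ok[OF IH(1-3) this]
  have st: "st (c,d) s (Suc n) = (nxt J k, w @ replicate k False @ [True])"
    by (simp add: J_def w_def k_def)
  have L: "Lc (w @ replicate k False @ [True]) = Lc w \<circ> ((f0^^k) \<circ> f1)"
    by (simp add: Lc_append Lc_rep Lc_True comp_assoc)
  have "Lc (w @ replicate k False @ [True]) ` {fst (nxt J k)..snd (nxt J k)}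
      = Lc w ` (((f0^^k) \<circ> f1) ` {fst (nxt J k)..snd (nxt J k)})"
    unfolding L by (simp only: image_comp)
  also have "\<dots> = {c..d}" using N IH by simp
  finally show ?case using N unfolding st by simp
qed

lemma st_len: "n \<le> length (snd (st J0 s n))"
  by (induction n) auto

lemma st_prefix: "n \<le> n' \<Longrightarrow> \<exists>v. snd (st J0 s n') = snd (st J0 s n) @ v"
proof (induction n' rule: dec_induct)
  case (step m)
  then obtain v where "snd (st J0 s m) = snd (st J0 s n) @ v" by blast
  then show ?case by (auto simp: Let_def)
qed simp

definition xs :: "real \<times> real \<Rightarrow> (nat \<Rightarrow> bool) \<Rightarrow> nat \<Rightarrow> bool" where
  "xs J0 s i = snd (st J0 s (Suc i)) ! i"

lemma xs_nth: assumes "i < length (snd (st J0 s n))" shows "xs J0 s i = snd (st J0 s n) ! i"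
proof (cases "Suc i \<le> n")
  case True
  then obtain v where "snd (st J0 s n) = snd (st J0 s (Suc i)) @ v" using st_prefix by blast
  moreover have "i < length (snd (st J0 s (Suc i)))" using st_len[of "Suc i" J0 s] by simp
  ultimately show ?thesis by (simp add: xs_def nth_append)
next
  case False
  then have "n \<le> Suc i" by simp
  then obtain v where "snd (st J0 s (Suc i)) = snd (st J0 s n) @ v" using st_prefix by blast
  with assms show ?thesis by (simp add: xs_def nth_append)
qed

lemma compo_xs: "compo f0 f1 (xs J0 s) (length (snd (st J0 s n))) = Lc (snd (st J0 s n))"
  unfolding Lc_def by (rule compo_prefix) (simp add: xs_nth)

lemma xs_contain:
  assumes cd: "0 < c" "c \<le> d" "d < 1"
  shows "{c..d} \<subseteq> adm_dom f0 f1 (glue (xs (c,d) s) xp)"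
proof -
  have "{c..d} \<subseteq> compo f0 f1 (xs (c,d) s) m ` {0..1}" for m
  proof -
    define J where "J = fst (st (c,d) s m)"
    define w where "w = snd (st (c,d) s m)"
    have I: "0 < fst J" "fst J \<le> snd J" "snd J < 1" "Lc w ` {fst J..snd J} = {c..d}"
      using st_inv[OF cd, of s m] by (auto simp: J_def w_def)
    have "{c..d} = Lc w ` {fst J..snd J}" using I by simp
    also have "\<dots> \<subseteq> Lc w ` {0..1}" using I by (intro image_mono) auto
    also have "\<dots> = compo f0 f1 (xs (c,d) s) (length w) ` {0..1}" by (simp add: w_def compo_xs)
    also have "\<dots> \<subseteq> compo f0 f1 (xs (c,d) s) m ` {0..1}"
      by (rule C_nest) (simp add: w_def st_len)
    finally show ?thesis .
  qed
  then show ?thesis unfolding adm_eq by auto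
qed

lemma st_agree: "(\<And>j. j < n \<Longrightarrow> s j = s' j) \<Longrightarrow> st J0 s n = st J0 s' n"
  by (induction n) auto

lemma rep_nth: "(replicate (K + of_bool b) False @ [True]) ! K = (\<not> b)"
proof (cases b)
  case True
  have "replicate (K + 1) False = replicate K False @ [False]"
    by (subst replicate_add) simp
  then have "replicate (K + 1) False @ [True] = replicate K False @ [False, True]" by simp
  then show ?thesis using True by (simp add: nth_append)
qed (simp add: nth_append)

lemma xs_inj: "inj (xs J0)"
proof (rule injI, rule ccontr)
  fix s s' assume eq: "xs J0 s = xs J0 s'" and ne: "s \<noteq> s'"
  then obtain n0 where "s n0 \<noteq> s' n0" by blast
  define n where "n = (LEAST n. s n \<noteq> s' n)"
  have sn: "s n \<noteq> s' n" unfolding n_def by (rule LeastI[of _ n0]) fact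
  have agree: "st J0 s n = st J0 s' n"
  proof (rule st_agree)
    fix j assume "j < n" then show "s j = s' j" unfolding n_def using not_less_Least by blast
  qed
  define w where "w = snd (st J0 s n)"
  define K where "K = Kf (snd (fst (st J0 s n)))"
  have val: "xs J0 t (length w + K) = (\<not> t n)" if "st J0 t n = st J0 s n" for t
  proof -
    have W: "snd (st J0 t (Suc n)) = w @ replicate (K + of_bool (t n)) False @ [True]"
      using that by (simp add: w_def K_def)
    have "xs J0 t (length w + K) = snd (st J0 t (Suc n)) ! (length w + K)"
      by (rule xs_nth) (simp only: W, simp)
    also have "\<dots> = (\<not> t n)" unfolding W using rep_nth[of K "t n"] by (simp add: nth_append)
    finally show ?thesis .
  qed
  have "xs J0 s (length w + K) = (\<not> s n)" by (rule val) simp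
  moreover have "xs J0 s' (length w + K) = (\<not> s' n)" by (rule val) (simp add: agree)
  ultimately show False using eq sn by simp
qed

lemma part3:
  assumes cd: "0 < c" "c \<le> d" "d < 1"
  shows "\<not> countable {xm. {c..d} \<subseteq> adm_dom f0 f1 (glue xm xp)}"
proof
  assume "countable {xm. {c..d} \<subseteq> adm_dom f0 f1 (glue xm xp)}"
  moreover have "range (xs (c,d)) \<subseteq> {xm. {c..d} \<subseteq> adm_dom f0 f1 (glue xm xp)}"
    using xs_contain[OF cd] by auto
  ultimately have "countable (range (xs (c,d)))" by (rule countable_subset[rotated])
  then have "countable (UNIV :: (nat \<Rightarrow> bool) set)"
    by (rule countable_image_inj_on) (rule xs_inj)
  then show False using uncountable_fun by simp
qed

end


context sys begin

lemma f0pow_onto: "(f0^^t) ` {0..1} = {0..1}"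
  using mono_img[of 0 1 "f0^^t"] f0pow_cont f0pow_mono_on by simp

lemma C_tail0:
  assumes "\<forall>i\<ge>K. xm i = False"
  shows "compo f0 f1 xm (K + t) ` {0..1} = compo f0 f1 xm K ` {0..1}"
proof -
  have "compo f0 f1 (\<lambda>i. xm (K + i)) t = compo f0 f1 (\<lambda>_. False) t"
    by (rule compo_prefix) (simp add: assms)
  then have "compo f0 f1 xm (K + t) = compo f0 f1 xm K \<circ> f0^^t"
    by (simp add: compo_add f0pow_eq)
  then have "compo f0 f1 xm (K + t) ` {0..1} = compo f0 f1 xm K ` ((f0^^t) ` {0..1})"
    by (simp only: image_comp)
  then show ?thesis by (simp only: f0pow_onto)
qed

lemma adm_tail0:
  assumes "\<forall>i\<ge>K. xm i = False"
  shows "adm_dom f0 f1 (glue xm xp) = compo f0 f1 xm K ` {0..1}"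
proof -
  have "compo f0 f1 xm K ` {0..1} \<subseteq> compo f0 f1 xm n ` {0..1}" for n
  proof (cases "n \<le> K")
    case True then show ?thesis by (rule C_nest)
  next
    case False
    then have "K \<le> n" by simp
    then obtain t where "n = K + t" using le_Suc_ex by blast
    then show ?thesis using C_tail0[OF assms] by simp
  qed
  then show ?thesis unfolding adm_eq negpart_glue by blast
qed

lemma C_nontriv: "\<exists>a b. a < b \<and> compo f0 f1 xm K ` {0..1} = {a..b}"
proof -
  have "connected (compo f0 f1 xm K ` {0..1}) \<and> compact (compo f0 f1 xm K ` {0..1})"
    by (simp add: C_compact C_connected)
  then obtain a b where ab: "compo f0 f1 xm K ` {0..1} = {a..b}"
    unfolding connected_compact_interval_1 by blast
  have "compo f0 f1 xm K 0 \<noteq> compo f0 f1 xm K 1"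
    using inj_onD[OF compo_inj, of xm K 0 1] by auto
  moreover have "compo f0 f1 xm K 0 \<in> {a..b}" "compo f0 f1 xm K 1 \<in> {a..b}"
    using ab[symmetric] by auto
  ultimately have "a < b" by auto
  with ab show ?thesis by blast
qed

lemma open_cyl: assumes T: "x \<in> T \<and> openin (product_topology (\<lambda>_. discrete_topology (UNIV::bool set)) UNIV) T"
  shows "\<exists>U. finite {i. U i \<noteq> UNIV} \<and> x \<in> Pi\<^sub>E UNIV U \<and> Pi\<^sub>E UNIV U \<subseteq> T"
proof -
  from T have "\<exists>U. finite {i \<in> UNIV. U i \<noteq> topspace (discrete_topology (UNIV::bool set))} \<and>
                 (\<forall>i \<in> UNIV. openin (discrete_topology UNIV) (U i)) \<and> x \<in> Pi\<^sub>E UNIV U \<and> Pi\<^sub>E UNIV U \<subseteq> T"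
    unfolding openin_product_topology_alt by blast
  then show ?thesis by simp
qed

lemma part2_dense:
  "dense_in Sigma2_half_top {xm. \<exists>a b. a < b \<and> adm_dom f0 f1 (glue xm xp) = {a..b}}"
  unfolding dense_in_def Sigma2_half_top_def
proof (intro conjI)
  show "{xm. \<exists>a b. a < b \<and> adm_dom f0 f1 (glue xm xp) = {a..b}}
        \<subseteq> topspace (product_topology (\<lambda>_. discrete_topology UNIV) UNIV)" by simp
  show "product_topology (\<lambda>_. discrete_topology UNIV) UNIV closure_of
        {xm. \<exists>a b. a < b \<and> adm_dom f0 f1 (glue xm xp) = {a..b}} =
        topspace (product_topology (\<lambda>_. discrete_topology UNIV) UNIV)"
  proof (rule equalityI[OF closure_of_subset_topspace], rule subsetI)
    fix x :: "nat \<Rightarrow> bool"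
    assume "x \<in> topspace (product_topology (\<lambda>_. discrete_topology UNIV) UNIV)"
    show "x \<in> product_topology (\<lambda>_. discrete_topology UNIV) UNIV closure_of
        {xm. \<exists>a b. a < b \<and> adm_dom f0 f1 (glue xm xp) = {a..b}}"
      unfolding in_closure_of
    proof (intro conjI allI impI)
      show "x \<in> topspace (product_topology (\<lambda>_. discrete_topology UNIV) UNIV)" by simp
      fix T assume T: "x \<in> T \<and> openin (product_topology (\<lambda>_. discrete_topology (UNIV::bool set)) UNIV) T"
      then obtain U where U: "finite {i. U i \<noteq> UNIV}" "x \<in> Pi\<^sub>E UNIV U" "Pi\<^sub>E UNIV U \<subseteq> T"
        using open_cyl by blast
      obtain K where K: "\<And>i. i \<in> {i. U i \<noteq> UNIV} \<Longrightarrow> i < K"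
        using U(1) unfolding finite_nat_set_iff_bounded by blast
      define y where "y i = (if i < K then x i else False)" for i
      have "y \<in> Pi\<^sub>E UNIV U" unfolding PiE_iff
      proof (intro conjI ballI)
        fix i :: nat
        show "y i \<in> U i"
        proof (cases "i < K")
          case True then show ?thesis using U(2) by (simp add: y_def PiE_iff)
        next
          case False
          have "U i = UNIV"
          proof (rule ccontr)
            assume "U i \<noteq> UNIV" then have "i < K" using K by simp
            with False show False by simp
          qed
          then show ?thesis by simp
        qed
      qed simp
      then have yT: "y \<in> T" using U(3) by blast
      have ad: "adm_dom f0 f1 (glue y xp) = compo f0 f1 y K ` {0..1}"
        by (rule adm_tail0) (simp add: y_def)
      obtain a b where "a < b" "compo f0 f1 y K ` {0..1} = {a..b}"
        using C_nontriv by blast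
      with ad yT have "\<exists>a b. a < b \<and> adm_dom f0 f1 (glue y xp) = {a..b}" "y \<in> T" by auto
      then show "\<exists>y. y \<in> {xm. \<exists>a b. a < b \<and> adm_dom f0 f1 (glue xm xp) = {a..b}} \<and> y \<in> T"
        by blast
    qed
  qed
qed

lemma part2_unc:
  "\<not> countable {xm. \<exists>a b. a < b \<and> adm_dom f0 f1 (glue xm xp) = {a..b}}"
proof
  assume c: "countable {xm. \<exists>a b. a < b \<and> adm_dom f0 f1 (glue xm xp) = {a..b}}"
  have "{xm. {1/4..3/4} \<subseteq> adm_dom f0 f1 (glue xm xp)}
        \<subseteq> {xm. \<exists>a b. a < b \<and> adm_dom f0 f1 (glue xm xp) = {a..b}}"
  proof
    fix xm assume "xm \<in> {xm. {1/4..3/4::real} \<subseteq> adm_dom f0 f1 (glue xm xp)}"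
    moreover obtain a b where "a \<le> b" "adm_dom f0 f1 (glue xm xp) = {a..b}"
      using adm_interval by blast
    ultimately show "xm \<in> {xm. \<exists>a b. a < b \<and> adm_dom f0 f1 (glue xm xp) = {a..b}}"
      by auto
  qed
  then have "countable {xm. {1/4..3/4::real} \<subseteq> adm_dom f0 f1 (glue xm xp)}"
    using c countable_subset by blast
  then show False using part3[of "1/4" "3/4" xp] by simp
qed

end


locale sysL = sys +
  fixes beta gamma :: real
  assumes beta1: "1 \<le> beta" and g0: "0 \<le> gamma" and g1: "gamma < 1"
    and lip0: "\<And>x y. x \<in> {0..1} \<Longrightarrow> y \<in> {0..1} \<Longrightarrow> \<bar>f0 x - f0 y\<bar> \<le> beta * \<bar>x - y\<bar>"
    and lip1: "\<And>x y. x \<in> {0..1} \<Longrightarrow> y \<in> {0..1} \<Longrightarrow> \<bar>f1 x - f1 y\<bar> \<le> gamma * \<bar>x - y\<bar>"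
begin

lemma fsel_lip: "x \<in> {0..1} \<Longrightarrow> y \<in> {0..1} \<Longrightarrow> \<bar>fsel f0 f1 b x - fsel f0 f1 b y\<bar> \<le> beta * \<bar>x - y\<bar>"
proof (cases b)
  case True
  assume xy: "x \<in> {0..1}" "y \<in> {0..1}"
  have "\<bar>f1 x - f1 y\<bar> \<le> gamma * \<bar>x - y\<bar>" by (rule lip1[OF xy])
  also have "\<dots> \<le> beta * \<bar>x - y\<bar>" using g1 beta1 by (intro mult_right_mono) auto
  finally show ?thesis using True by (simp add: fsel_def)
qed (simp add: fsel_def lip0)

lemma compo_lip:
  "x \<in> {0..1} \<Longrightarrow> y \<in> {0..1} \<Longrightarrow> \<bar>compo f0 f1 xm m x - compo f0 f1 xm m y\<bar> \<le> beta^m * \<bar>x - y\<bar>"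
proof (induction m arbitrary: x y)
  case (Suc m)
  have "\<bar>compo f0 f1 xm (Suc m) x - compo f0 f1 xm (Suc m) y\<bar>
      \<le> beta^m * \<bar>fsel f0 f1 (xm m) x - fsel f0 f1 (xm m) y\<bar>"
    using Suc.IH[of "fsel f0 f1 (xm m) x" "fsel f0 f1 (xm m) y"] Suc.prems by (simp add: fsel_maps)
  also have "\<dots> \<le> beta^m * (beta * \<bar>x - y\<bar>)"
    using fsel_lip[OF Suc.prems] beta1 by (intro mult_left_mono) auto
  finally show ?case by (simp add: algebra_simps)
qed simp

lemma f1pow_lip:
  "x \<in> {0..1} \<Longrightarrow> y \<in> {0..1} \<Longrightarrow> \<bar>(f1^^t) x - (f1^^t) y\<bar> \<le> gamma^t * \<bar>x - y\<bar>"
proof (induction t arbitrary: x y)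
  case (Suc t)
  have eq: "f1^^t = compo f0 f1 (\<lambda>_. True) t" by (simp add: compo_const fsel_def)
  have m: "(f1^^t) x \<in> {0..1}" "(f1^^t) y \<in> {0..1}" using Suc.prems unfolding eq by (auto simp: compo_maps)
  have "\<bar>(f1^^Suc t) x - (f1^^Suc t) y\<bar> \<le> gamma * \<bar>(f1^^t) x - (f1^^t) y\<bar>"
    using lip1[OF m] by simp
  also have "\<dots> \<le> gamma * (gamma^t * \<bar>x - y\<bar>)"
    using Suc g0 by (intro mult_left_mono) auto
  finally show ?case by (simp add: algebra_simps)
qed simp

definition UU :: "nat \<Rightarrow> (int \<Rightarrow> bool) set" where
  "UU n = {xi. \<exists>m. \<forall>x\<in>{0..1}. \<forall>y\<in>{0..1}.
      \<bar>compo f0 f1 (negpart xi) m x - compo f0 f1 (negpart xi) m y\<bar> < 1 / Suc n}"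

lemma UU_open: "openin Sigma2_top (UU n)"
proof -
  interpret D: Metric_space UNIV dSigma by (rule dSigma_metric)
  show ?thesis unfolding Sigma2_top_def D.openin_mtopology
  proof (intro conjI allI impI)
    fix xi assume "xi \<in> UU n"
    then obtain m where m: "\<forall>x\<in>{0..1}. \<forall>y\<in>{0..1}.
      \<bar>compo f0 f1 (negpart xi) m x - compo f0 f1 (negpart xi) m y\<bar> < 1 / Suc n"
      unfolding UU_def by blast
    show "\<exists>r>0. D.mball xi r \<subseteq> UU n"
    proof (intro exI conjI)
      show "(0::real) < (1/2)^m" by simp
      show "D.mball xi ((1/2)^m) \<subseteq> UU n"
      proof
        fix eta assume "eta \<in> D.mball xi ((1/2)^m)"
        then have d: "dSigma xi eta < (1/2)^m" by simp
        have ce: "compo f0 f1 (negpart eta) m = compo f0 f1 (negpart xi) m"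
        proof (rule compo_prefix)
          fix j assume "j < m"
          then have "xi (- int j - 1) = eta (- int j - 1)"
            by (intro dSigma_small[OF d]) auto
          then show "negpart eta j = negpart xi j" by (simp add: negpart_def)
        qed
        show "eta \<in> UU n" unfolding UU_def using m ce by (intro CollectI exI[of _ m]) simp
      qed
    qed
  qed simp
qed

lemma UU_dense: "Sigma2_top closure_of (UU n) = topspace Sigma2_top"
proof -
  interpret D: Metric_space UNIV dSigma by (rule dSigma_metric)
  have "xi \<in> D.mtopology closure_of (UU n)" for xi
    unfolding D.metric_closure_of
  proof (intro CollectI conjI allI impI)
    fix r :: real assume r: "0 < r"
    obtain M where M: "(1/2::real)^M < r/2" using real_arch_pow_inv[of "r/2" "1/2"] r by auto
    define eta where "eta i = (if i < - int M then True else xi i)" for i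
    have "dSigma xi eta \<le> 2*(1/2)^M" by (rule dSigma_close) (auto simp: eta_def)
    then have close: "dSigma xi eta < r" using M by simp
    have bpos: "0 < beta^M" using beta1 by simp
    obtain t where t: "gamma^t < 1 / (Suc n * beta^M)"
      using real_arch_pow_inv[of "1 / (Suc n * beta^M)" gamma] bpos g1 by auto
    have neg: "negpart eta j = (if M \<le> j then True else negpart xi j)" for j
      by (auto simp: negpart_def eta_def)
    have "compo f0 f1 (negpart eta) M = compo f0 f1 (negpart xi) M"
      by (rule compo_prefix) (simp add: neg)
    moreover have "compo f0 f1 (\<lambda>i. negpart eta (M + i)) t = f1^^t"
      by (subst compo_prefix[where ym="\<lambda>_. True"]) (auto simp: neg compo_const fsel_def)
    ultimately have ceq: "compo f0 f1 (negpart eta) (M + t) = compo f0 f1 (negpart xi) M \<circ> f1^^t"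
      by (simp add: compo_add)
    have "eta \<in> UU n" unfolding UU_def
    proof (intro CollectI exI ballI)
      fix x y :: real assume xy: "x \<in> {0..1}" "y \<in> {0..1}"
      have f1t: "(f1^^t) x \<in> {0..1}" "(f1^^t) y \<in> {0..1}"
        using xy compo_maps[of _ "\<lambda>_. True" t] by (auto simp: compo_const fsel_def)
      have "\<bar>compo f0 f1 (negpart eta) (M + t) x - compo f0 f1 (negpart eta) (M + t) y\<bar>
         \<le> beta^M * \<bar>(f1^^t) x - (f1^^t) y\<bar>"
        unfolding ceq using compo_lip[OF f1t] by simp
      also have "\<dots> \<le> beta^M * (gamma^t * \<bar>x - y\<bar>)"
        using f1pow_lip[OF xy] bpos by (intro mult_left_mono) auto
      also have "\<dots> \<le> beta^M * gamma^t"
        using xy bpos g0 by (intro mult_left_mono) (auto intro: mult_left_le)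
      also have "\<dots> < beta^M * (1 / (Suc n * beta^M))"
        using t bpos by (intro mult_strict_left_mono) auto
      also have "\<dots> = 1 / Suc n"
      proof -
        have "0 < real (Suc n) * beta^M" using bpos by simp
        then show ?thesis using bpos by (simp add: field_simps)
      qed
      finally show "\<bar>compo f0 f1 (negpart eta) (M + t) x - compo f0 f1 (negpart eta) (M + t) y\<bar> < 1 / Suc n" .
    qed
    then show "\<exists>y\<in>UU n. y \<in> D.mball xi r" using close by auto
  qed simp
  then show ?thesis unfolding Sigma2_top_def by (auto intro: closure_of_subset_topspace)
qed

lemma UU_inter: "(\<Inter>n. UU n) \<subseteq> {xi. \<exists>p. adm_dom f0 f1 xi = {p}}"
proof
  fix xi assume xi: "xi \<in> (\<Inter>n. UU n)"
  obtain p where p: "p \<in> adm_dom f0 f1 xi" using adm_nonempty by blast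
  have "q = p" if q: "q \<in> adm_dom f0 f1 xi" for q
  proof (rule ccontr)
    assume "q \<noteq> p"
    then obtain n where n: "inverse (real (Suc n)) < \<bar>q - p\<bar>"
      using reals_Archimedean[of "\<bar>q - p\<bar>"] by auto
    from xi obtain m where m: "\<forall>x\<in>{0..1}. \<forall>y\<in>{0..1}.
      \<bar>compo f0 f1 (negpart xi) m x - compo f0 f1 (negpart xi) m y\<bar> < 1 / Suc n"
      unfolding UU_def by blast
    from adm_sub[of xi m] q p obtain x y where "x \<in> {0..1}" "y \<in> {0..1}"
      "q = compo f0 f1 (negpart xi) m x" "p = compo f0 f1 (negpart xi) m y" by blast
    with m have "\<bar>q - p\<bar> < 1 / Suc n" by auto
    with n show False by (simp add: divide_inverse)
  qed
  with p have "adm_dom f0 f1 xi = {p}" by blast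
  then show "xi \<in> {xi. \<exists>p. adm_dom f0 f1 xi = {p}}" by blast
qed

lemma part1: "residual_in Sigma2_top {xi. \<exists>p. adm_dom f0 f1 xi = {p}}"
proof -
  interpret D: Metric_space UNIV dSigma by (rule dSigma_metric)
  show ?thesis unfolding residual_in_def
    using UU_open UU_dense UU_inter by (auto simp: Sigma2_top_def)
qed

end


theorem proposition3p16:
  fixes f0 f1 f0' f1' :: "real \<Rightarrow> real"
    and beta lam alpha gamma' gamma alphabar a0 b0 a1 b1 :: real
    and N :: nat
  assumes
    \<comment> \<open>f0, f1 are C^1 injective self-maps of [0,1]\<close>
    f0_maps: "f0 ` {0..1} \<subseteq> {0..1}" and f0_inj: "inj_on f0 {0..1}"
    and f0_der: "\<And>x. x \<in> {0..1} \<Longrightarrow> (f0 has_real_derivative f0' x) (at x within {0..1})"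
    and f0'_cont: "continuous_on {0..1} f0'"
    and f1_maps: "f1 ` {0..1} \<subseteq> {0..1}" and f1_inj: "inj_on f1 {0..1}"
    and f1_der: "\<And>x. x \<in> {0..1} \<Longrightarrow> (f1 has_real_derivative f1' x) (at x within {0..1})"
    and f1'_cont: "continuous_on {0..1} f1'"
    \<comment> \<open>(F0.i)\<close>
    and f0_incr: "mono_on {0..1} f0"
    and f0_fix: "{x \<in> {0..1}. f0 x = x} = {0, 1}"
    and beta_def: "f0' 0 = beta" "beta > 1"
    and lambda_def: "f0' 1 = lam" "0 < lam" "lam < 1"
    and f0'_bounds: "\<And>x. x \<in> {0..1} \<Longrightarrow> lam \<le> f0' x \<and> f0' x \<le> beta"
    \<comment> \<open>(F0.ii)\<close>
    and I0: "0 < a0" "a0 \<le> b0" "b0 < 1" "b0 = f0 a0"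
    and I1: "a1 \<le> b1" "b1 = f0 a1"
    and alpha_gt: "alpha > 1" and N: "N \<ge> 1"
    and f0N_img: "(f0 ^^ N) ` {a0..b0} = {a1..b1}"
    and f0N_der: "\<And>x. x \<in> {a0..b0} \<Longrightarrow>
        \<exists>D. ((f0 ^^ N) has_real_derivative D) (at x within {0..1}) \<and> lam * D > alpha"
    and f0_exp: "\<And>x. x \<in> {0..b0} \<Longrightarrow> f0' x > 1"
    and f0_contr: "\<And>x. x \<in> {a1..1} \<Longrightarrow> f0' x < 1"
    \<comment> \<open>(F1.i)\<close>
    and f1_decr: "antimono_on {0..1} f1"
    and gamma_lo: "gamma' = (INF x\<in>{0..1}. \<bar>f1' x\<bar>)"
    and gamma_hi: "gamma = (SUP x\<in>{0..1}. \<bar>f1' x\<bar>)" "gamma' \<le> gamma" "gamma < 1"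
    \<comment> \<open>(F1.ii)\<close>
    and alphabar_def: "alphabar > 1 / alpha"
      "\<And>x. x \<in> {f1 (f1 a1)..a1} \<Longrightarrow> \<bar>f1' x\<bar> \<ge> alphabar"
    \<comment> \<open>(F01)\<close>
    and F01: "f1 1 = 0" "f1 ` {a1..1} \<subseteq> {0..<a0}"
      "{0..<(the_inv_into {0..1} f0 ^^ 2) b0} \<subseteq> f1 ` {0..1}"
  shows
    "residual_in Sigma2_top {xi. \<exists>p. adm_dom f0 f1 xi = {p}}
     \<and> (\<forall>xp :: nat \<Rightarrow> bool.
          \<not> countable {xm. \<exists>a b. a < b \<and> adm_dom f0 f1 (glue xm xp) = {a..b}}
          \<and> dense_in Sigma2_half_top {xm. \<exists>a b. a < b \<and> adm_dom f0 f1 (glue xm xp) = {a..b}})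
     \<and> (\<forall>c d. 0 < c \<and> c \<le> d \<and> d < 1 \<longrightarrow>
          (\<forall>xp :: nat \<Rightarrow> bool. \<not> countable {xm. {c..d} \<subseteq> adm_dom f0 f1 (glue xm xp)}))"
proof -
  have c0: "continuous_on {0..1} f0"
    unfolding continuous_on_eq_continuous_within using f0_der DERIV_continuous by blast
  have c1: "continuous_on {0..1} f1"
    unfolding continuous_on_eq_continuous_within using f1_der DERIV_continuous by blast
  have fix0: "0 \<in> {x \<in> {0..1}. f0 x = x}" "1 \<in> {x \<in> {0..1}. f0 x = x}" using f0_fix by auto
  then have f00: "f0 0 = 0" and f01: "f0 1 = 1" by auto
  have nofix: "f0 x \<noteq> x" if "0 < x" "x < 1" for x
  proof
    assume "f0 x = x"
    then have "x \<in> {x \<in> {0..1}. f0 x = x}" using that by auto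
    then have "x \<in> {0, 1}" using f0_fix by blast
    then show False using that by auto
  qed
  have a0gt: "a0 < f0 a0" using nofix[of a0] I0 by auto
  have f0gt: "x < f0 x" if x: "0 < x" "x < 1" for x
  proof (rule ccontr)
    assume "\<not> x < f0 x"
    then have lt: "f0 x - x < 0" using nofix[OF x] by auto
    have g0: "0 < f0 a0 - a0" using a0gt by simp
    have ex: "\<exists>t. min x a0 \<le> t \<and> t \<le> max x a0 \<and> f0 t - t = 0"
    proof (cases "x \<le> a0")
      case True
      have "continuous_on {x..a0} (\<lambda>t. f0 t - t)"
        using x I0 by (intro continuous_intros continuous_on_subset[OF c0]) auto
      then obtain t where "x \<le> t" "t \<le> a0" "f0 t - t = 0"
        using IVT'[of "\<lambda>t. f0 t - t" x 0 a0] lt g0 True by auto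
      then show ?thesis using True by (intro exI[of _ t]) auto
    next
      case False
      have "continuous_on {a0..x} (\<lambda>t. f0 t - t)"
        using x I0 by (intro continuous_intros continuous_on_subset[OF c0]) auto
      then obtain t where "a0 \<le> t" "t \<le> x" "f0 t - t = 0"
        using IVT2'[of "\<lambda>t. f0 t - t" x 0 a0] lt g0 False by auto
      then show ?thesis using False by (intro exI[of _ t]) auto
    qed
    then obtain t where t: "min x a0 \<le> t" "t \<le> max x a0" "f0 t = t" by auto
    have "0 < t" "t < 1" using t x I0 by auto
    then show False using nofix t(3) by blast
  qed
  have bdd: "bdd_above ((\<lambda>x. \<bar>f1' x\<bar>) ` {0..1})"
  proof -
    have "continuous_on {0..1} (\<lambda>x. \<bar>f1' x\<bar>)" using f1'_cont by (intro continuous_intros)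
    then have "compact ((\<lambda>x. \<bar>f1' x\<bar>) ` {0..1})" by (rule compact_continuous_image) simp
    then show ?thesis by (intro bounded_imp_bdd_above compact_imp_bounded)
  qed
  have f1'_le: "\<bar>f1' x\<bar> \<le> gamma" if "x \<in> {0..1}" for x
    unfolding gamma_hi(1) by (rule cSUP_upper[OF that bdd])
  have g0: "0 \<le> gamma" using f1'_le[of 0] by auto
  have lip0: "\<bar>f0 x - f0 y\<bar> \<le> beta * \<bar>x - y\<bar>" if "x \<in> {0..1}" "y \<in> {0..1}" for x y
  proof -
    have "norm (f0 x - f0 y) \<le> beta * norm (x - y)"
    proof (rule field_differentiable_bound[where S="{0..1}" and f'=f0'])
      fix z :: real assume "z \<in> {0..1}"
      then show "norm (f0' z) \<le> beta" using f0'_bounds[of z] lambda_def by auto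
    qed (use that f0_der in auto)
    then show ?thesis by simp
  qed
  have lip1: "\<bar>f1 x - f1 y\<bar> \<le> gamma * \<bar>x - y\<bar>" if "x \<in> {0..1}" "y \<in> {0..1}" for x y
  proof -
    have "norm (f1 x - f1 y) \<le> gamma * norm (x - y)"
    proof (rule field_differentiable_bound[where S="{0..1}" and f'=f1'])
      fix z :: real assume "z \<in> {0..1}"
      then show "norm (f1' z) \<le> gamma" using f1'_le by auto
    qed (use that f1_der in auto)
    then show ?thesis by simp
  qed
  interpret L: sysL f0 f1 beta gamma
  proof
    show "1 \<le> beta" using beta_def by simp
  qed (use c0 c1 f0_maps f1_maps f0_inj f1_inj f0_incr f1_decr f00 f01 f0gt F01(1) g0 gamma_hi lip0 lip1
       in auto)
  show ?thesis
    using L.part1 L.part2_unc L.part2_dense L.part3 by blast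
qed


end
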